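(* Any one-sided (possibly adaptive) tester for $k$-monotonicity of functions $f\colon[n]\to\{0,1\}$ with distance parameter $\varepsilon$ must have query complexity $\Omega(k/\varepsilon)$.
   Context: $[n]=\{1,\dots,n\}$ with its usual total order. A function $f\colon[n]\to\{0,1\}$ is $k$-monotone if there do not exist $x_1\leq x_2\leq\cdots\leq x_{k+1}$ with $f(x_1)=1$ and $f(x_i)\neq f(x_{i+1})$ for all $i\in[k]$. Distance is normalized Hamming distance; $f$ is $\varepsilon$-far from $k$-monotone if $\Pr_x[f(x)\neq g(x)]\geq\varepsilon$ for every $k$-monotone $g$. A tester, given $\varepsilon$ and query access to $f$, accepts $k$-monotone $f$ with probability at least $2/3$ and rejects $\varepsilon$-far $f$ with probability at least $2/3$; one-sided means $k$-monotone functions are accepted with probability $1$. Adaptive testers may choose queries depending on previous answers. *)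

theory Defs
  imports "HOL-Probability.Probability"
begin

text \<open>Functions [n] -> {0,1} are modelled as f :: nat => bool, only values on {1..n} matter
  (True = 1, False = 0).\<close>

definition k_monotone :: "nat \<Rightarrow> nat \<Rightarrow> (nat \<Rightarrow> bool) \<Rightarrow> bool" where
  "k_monotone n k f \<longleftrightarrow>
     \<not> (\<exists>x :: nat \<Rightarrow> nat.
          (\<forall>i\<in>{1..k+1}. x i \<in> {1..n}) \<and>
          (\<forall>i\<in>{1..k}. x i \<le> x (Suc i)) \<and>
          f (x 1) \<and>
          (\<forall>i\<in>{1..k}. f (x i) \<noteq> f (x (Suc i))))"

definition fdist :: "nat \<Rightarrow> (nat \<Rightarrow> bool) \<Rightarrow> (nat \<Rightarrow> bool) \<Rightarrow> real" where
  "fdist n f g = real (card {x\<in>{1..n}. f x \<noteq> g x}) / real n"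

definition far_from_k_monotone :: "nat \<Rightarrow> nat \<Rightarrow> real \<Rightarrow> (nat \<Rightarrow> bool) \<Rightarrow> bool" where
  "far_from_k_monotone n k \<epsilon> f \<longleftrightarrow> (\<forall>g. k_monotone n k g \<longrightarrow> fdist n f g \<ge> \<epsilon>)"

text \<open>Deterministic adaptive query algorithms = decision trees.
  Node x t0 t1 queries f at x and continues with t1 if f x = 1, with t0 otherwise.
  Leaf b outputs b (True = accept).\<close>

datatype dtree = Leaf bool | Node nat dtree dtree

fun run :: "dtree \<Rightarrow> (nat \<Rightarrow> bool) \<Rightarrow> bool" where
  "run (Leaf b) f = b"
| "run (Node x t0 t1) f = (if f x then run t1 f else run t0 f)"

fun num_queries :: "dtree \<Rightarrow> (nat \<Rightarrow> bool) \<Rightarrow> nat" where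
  "num_queries (Leaf b) f = 0"
| "num_queries (Node x t0 t1) f = Suc (if f x then num_queries t1 f else num_queries t0 f)"

fun queries_in :: "nat \<Rightarrow> dtree \<Rightarrow> bool" where
  "queries_in n (Leaf b) = True"
| "queries_in n (Node x t0 t1) = (x \<in> {1..n} \<and> queries_in n t0 \<and> queries_in n t1)"

text \<open>A randomized (possibly adaptive) tester is a probability distribution over decision
  trees.\<close>

definition one_sided_tester ::
  "nat \<Rightarrow> nat \<Rightarrow> real \<Rightarrow> dtree pmf \<Rightarrow> nat \<Rightarrow> bool" where
  "one_sided_tester n k \<epsilon> T q \<longleftrightarrow>
     (\<forall>t\<in>set_pmf T. queries_in n t \<and> (\<forall>f. num_queries t f \<le> q)) \<and>
     (\<forall>f. k_monotone n k f \<longrightarrow> measure_pmf.prob T {t. run t f} = 1) \<and>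
     (\<forall>f. far_from_k_monotone n k \<epsilon> f \<longrightarrow> measure_pmf.prob T {t. \<not> run t f} \<ge> 2/3)"

end

theory Submission
  imports Defs
begin

definition Ib :: "nat \<Rightarrow> nat \<Rightarrow> nat set" where
  "Ib h c = {c*(2*h)<..c*(2*h)+h}"
definition Jb :: "nat \<Rightarrow> nat \<Rightarrow> nat set" where
  "Jb h c = {c*(2*h)+h<..(Suc c)*(2*h)}"
definition fS :: "nat \<Rightarrow> nat set \<Rightarrow> nat \<Rightarrow> bool" where
  "fS h S x \<longleftrightarrow> (\<exists>c\<in>S. x \<in> Ib h c)"

lemma blk_unique:
  assumes "c*(2*h) < x" "x \<le> Suc c*(2*h)" "c'*(2*h) < x" "x \<le> Suc c'*(2*h)"
  shows "c = c'"
proof (rule ccontr)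
  assume "c \<noteq> c'"
  then consider "Suc c \<le> c'" | "Suc c' \<le> c" by linarith
  then show False
  proof cases
    case 1 then have "Suc c*(2*h) \<le> c'*(2*h)" by (rule mult_le_mono1)
    then show False using assms by linarith
  next
    case 2 then have "Suc c'*(2*h) \<le> c*(2*h)" by (rule mult_le_mono1)
    then show False using assms by linarith
  qed
qed

lemma Ib_unique: "x \<in> Ib h c \<Longrightarrow> x \<in> Ib h c' \<Longrightarrow> c = c'"
  unfolding Ib_def by (rule blk_unique[of c h x c']) auto

lemma Ib_Jb_disj: "x \<in> Ib h c \<Longrightarrow> x \<in> Jb h c' \<Longrightarrow> False"
proof -
  assume a: "x \<in> Ib h c" "x \<in> Jb h c'"
  then have "c = c'" unfolding Ib_def Jb_def by (intro blk_unique[of c h x c']) auto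
  then show False using a unfolding Ib_def Jb_def by auto
qed

lemma Jb_not_fS: "x \<in> Jb h c \<Longrightarrow> \<not> fS h S x"
  unfolding fS_def using Ib_Jb_disj by blast

lemma chain_parity:
  assumes alt: "\<forall>i\<in>{1..k}. f (x i) \<noteq> f (x (Suc i))" and f1: "f (x 1)"
    and "1 \<le> i" "i \<le> k+1"
  shows "f (x i) = odd i"
  using assms(3,4)
proof (induction i rule: nat_induct_at_least)
  case base then show ?case using f1 by simp
next
  case (Suc i)
  then have "f (x i) = odd i" by simp
  moreover have "f (x i) \<noteq> f (x (Suc i))" using alt Suc by auto
  ultimately show ?case by auto
qed

lemma chain_mono:
  assumes mono: "\<forall>i\<in>{1..k}. x i \<le> x (Suc i)"
    and "1 \<le> i" "i \<le> j" "j \<le> k+1"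
  shows "x i \<le> (x j::nat)"
  using assms(3,4)
proof (induction j rule: nat_induct_at_least)
  case base then show ?case by simp
next
  case (Suc j)
  then have "x i \<le> x j" by simp
  moreover have "x j \<le> x (Suc j)" using mono Suc assms(2) by auto
  ultimately show ?case by linarith
qed

lemma fS_kmono:
  assumes fin: "finite S" and cS: "card S < r" and r: "r = (k+2) div 2"
  shows "k_monotone n k (fS h S)"
  unfolding k_monotone_def
proof
  assume "\<exists>x. (\<forall>i\<in>{1..k+1}. x i \<in> {1..n}) \<and> (\<forall>i\<in>{1..k}. x i \<le> x (Suc i)) \<and>
          fS h S (x 1) \<and> (\<forall>i\<in>{1..k}. fS h S (x i) \<noteq> fS h S (x (Suc i)))"
  then obtain x where mono: "\<forall>i\<in>{1..k}. x i \<le> x (Suc i)" and f1: "fS h S (x 1)"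
    and alt: "\<forall>i\<in>{1..k}. fS h S (x i) \<noteq> fS h S (x (Suc i))" by blast
  have par: "\<And>i. 1 \<le> i \<Longrightarrow> i \<le> k+1 \<Longrightarrow> fS h S (x i) = odd i"
    using chain_parity[of k "fS h S" x, OF alt f1] by blast
  have mo: "\<And>i j. 1 \<le> i \<Longrightarrow> i \<le> j \<Longrightarrow> j \<le> k+1 \<Longrightarrow> x i \<le> x j"
    using chain_mono[of k x, OF mono] by blast
  define cb where "cb j = (SOME c. c \<in> S \<and> x (2*j+1) \<in> Ib h c)" for j
  have cbP: "cb j \<in> S \<and> x (2*j+1) \<in> Ib h (cb j)" if "j < r" for j
  proof -
    have "2*j+1 \<le> k+1" using that r by linarith
    then have "fS h S (x (2*j+1))" using par[of "2*j+1"] by simp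
    then have "\<exists>c. c \<in> S \<and> x (2*j+1) \<in> Ib h c" unfolding fS_def by blast
    then show ?thesis unfolding cb_def by (rule someI_ex)
  qed
  have inj: "inj_on cb {..<r}"
  proof (rule linorder_inj_onI')
    fix i j assume ij0: "i \<in> {..<r}" "j \<in> {..<r}" "i < j"
    show "cb i \<noteq> cb j"
    proof
    assume "cb i = cb j"
    with ij0 have ij: "i < j" "i \<in> {..<r}" "j \<in> {..<r}" "cb i = cb j" by auto
    let ?c = "cb i"
    have a: "x (2*i+1) \<in> Ib h ?c" using cbP[of i] ij by auto
    have b: "x (2*j+1) \<in> Ib h ?c" using cbP[of j] ij by auto
    have jk: "2*j+1 \<le> k+1" using ij r by auto
    have "x (2*i+1) \<le> x (2*i+2)" by (rule mo) (use ij jk in auto)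
    moreover have "x (2*i+2) \<le> x (2*j+1)" by (rule mo) (use ij jk in auto)
    ultimately have "x (2*i+2) \<in> Ib h ?c" using a b unfolding Ib_def by auto
    then have "fS h S (x (2*i+2))" unfolding fS_def using cbP ij by auto
    moreover have "fS h S (x (2*i+2)) = odd (2*i+2)" using par[of "2*i+2"] ij jk by simp
    ultimately show False by simp
    qed
  qed
  have "cb ` {..<r} \<subseteq> S" using cbP by auto
  then have "card (cb ` {..<r}) \<le> card S" using fin by (rule card_mono[rotated])
  then have "r \<le> card S" using card_image[OF inj] by simp
  then show False using cS by simp
qed

lemma few_good:
  assumes km: "k_monotone n k g" and S: "S \<subseteq> {..<m}" and r: "r = (k+2) div 2"
    and hm: "m*(2*h) \<le> n"
  shows "card {c\<in>S. (\<exists>a\<in>Ib h c. g a) \<and> (\<exists>z\<in>Jb h c. \<not> g z)} < r"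
proof (rule ccontr)
  define G where "G = {c\<in>S. (\<exists>a\<in>Ib h c. g a) \<and> (\<exists>z\<in>Jb h c. \<not> g z)}"
  assume "\<not> card {c\<in>S. (\<exists>a\<in>Ib h c. g a) \<and> (\<exists>z\<in>Jb h c. \<not> g z)} < r"
  then have rG: "r \<le> card G" unfolding G_def by simp
  have finG: "finite G" by (rule finite_subset[OF _ finite_lessThan[of m]]) (use S in \<open>auto simp: G_def\<close>)
  define cs where "cs = sorted_list_of_set G"
  have lcs: "length cs = card G" unfolding cs_def by simp
  have scs: "sorted_wrt (<) cs" unfolding cs_def by (simp add: strict_sorted_list_of_set)
  have setcs: "set cs = G" unfolding cs_def using finG by simp
  define a where "a c = (SOME a. a \<in> Ib h c \<and> g a)" for c
  define z where "z c = (SOME z. z \<in> Jb h c \<and> \<not> g z)" for c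
  have aP: "a c \<in> Ib h c \<and> g (a c)" if "c \<in> G" for c
    unfolding a_def using that unfolding G_def by (metis (mono_tags, lifting) mem_Collect_eq someI)
  have zP: "z c \<in> Jb h c \<and> \<not> g (z c)" if "c \<in> G" for c
    unfolding z_def using that unfolding G_def by (metis (mono_tags, lifting) mem_Collect_eq someI)
  have csG: "cs ! j \<in> G" if "j < r" for j
    using that rG lcs setcs by (metis dual_order.strict_trans1 nth_mem)
  define x where "x i = (if odd i then a (cs!((i-1) div 2)) else z (cs!((i-1) div 2)))" for i
  have x1: "x (2*j+1) = a (cs!j)" for j unfolding x_def by simp
  have x2: "x (2*j+2) = z (cs!j)" for j unfolding x_def by simp
  have split: "\<exists>j. i = 2*j+1 \<or> i = 2*j+2" if "1 \<le> i" for i::nat using that by presburger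
  have krr: "k+1 \<le> 2*r" using r by linarith
  have range: "x i \<in> {1..n}" if "i \<in> {1..k+1}" for i
  proof -
    have i1: "1 \<le> i" using that by simp
    obtain j where j: "i = 2*j+1 \<or> i = 2*j+2" using split[OF i1] by blast
    have jr: "j < r" using j that krr by auto
    have cG: "cs!j \<in> G" using csG jr .
    then have cm: "Suc (cs!j) \<le> m" using S unfolding G_def by auto
    have "Suc (cs!j)*(2*h) \<le> m*(2*h)" using cm by (rule mult_le_mono1)
    moreover have "x i \<in> {cs!j*(2*h)<..Suc (cs!j)*(2*h)}"
      using j aP[OF cG] zP[OF cG] x1 x2 unfolding Ib_def Jb_def by auto
    ultimately show ?thesis using hm by auto
  qed
  have gx: "g (x i) = odd i" if "i \<in> {1..k+1}" for i
  proof -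
    have i1: "1 \<le> i" using that by simp
    obtain j where j: "i = 2*j+1 \<or> i = 2*j+2" using split[OF i1] by blast
    have jr: "j < r" using j that krr by auto
    have cG: "cs!j \<in> G" using csG jr .
    show ?thesis using j aP[OF cG] zP[OF cG] x1 x2 by auto
  qed
  have mono: "x i \<le> x (Suc i)" if "i \<in> {1..k}" for i
  proof -
    have i1: "1 \<le> i" using that by simp
    obtain j where j: "i = 2*j+1 \<or> i = 2*j+2" using split[OF i1] by blast
    show ?thesis
    proof (cases "i = 2*j+1")
      case True
      have jr: "j < r" using True that krr by auto
      have cG: "cs!j \<in> G" using csG jr .
      have "Suc i = 2*j+2" using True by simp
      then show ?thesis using True aP[OF cG] zP[OF cG] x1 x2 unfolding Ib_def Jb_def by auto
    next
      case False
      then have F: "i = 2*j+2" using j by auto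
      have jr: "Suc j < r" using F that krr by auto
      have cG: "cs!j \<in> G" using csG jr by simp
      have cG': "cs!Suc j \<in> G" using csG jr by simp
      have "Suc j < length cs" using jr rG lcs by simp
      then have "cs!j < cs!Suc j" using sorted_wrt_nth_less[OF scs, of j "Suc j"] by simp
      then have "Suc (cs!j)*(2*h) \<le> cs!Suc j*(2*h)" by (intro mult_le_mono1) simp
      moreover have "Suc i = 2*(Suc j)+1" using F by simp
      ultimately show ?thesis using F x1[of "Suc j"] x2[of j] aP[OF cG'] zP[OF cG]
        unfolding Ib_def Jb_def by auto
    qed
  qed
  have "\<exists>x. (\<forall>i\<in>{1..k+1}. x i \<in> {1..n}) \<and> (\<forall>i\<in>{1..k}. x i \<le> x (Suc i)) \<and>
          g (x 1) \<and> (\<forall>i\<in>{1..k}. g (x i) \<noteq> g (x (Suc i)))"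
  proof (intro exI conjI ballI)
    show "g (x 1)" using gx[of 1] by simp
    fix i assume i: "i \<in> {1..k}"
    then show "g (x i) \<noteq> g (x (Suc i))" using gx[of i] gx[of "Suc i"] by auto
  qed (use range mono in auto)
  then show False using km unfolding k_monotone_def by blast
qed

lemma card_Ib: "card (Ib h c) = h" unfolding Ib_def by simp
lemma card_Jb: "card (Jb h c) = h" unfolding Jb_def by (simp add: algebra_simps)

lemma far_count:
  assumes km: "k_monotone n k g" and S: "S \<subseteq> {..<m}" and r: "r = (k+2) div 2"
    and hm: "m*(2*h) \<le> n"
  shows "(card S + 1 - r) * h \<le> card {x\<in>{1..n}. fS h S x \<noteq> g x}"
proof -
  define G where "G = {c\<in>S. (\<exists>a\<in>Ib h c. g a) \<and> (\<exists>z\<in>Jb h c. \<not> g z)}"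
  have cG: "card G < r" unfolding G_def by (rule few_good[OF km S r hm])
  have finS: "finite S" using S finite_subset by blast
  define B where "B = S - G"
  have "card B = card S - card G" unfolding B_def
    by (rule card_Diff_subset) (use finS in \<open>auto simp: G_def intro: finite_subset\<close>)
  then have cB: "card S + 1 - r \<le> card B" using cG by linarith
  define D where "D c = (if (\<forall>a\<in>Ib h c. \<not> g a) then Ib h c else Jb h c)" for c
  define Dis where "Dis = {x\<in>{1..n}. fS h S x \<noteq> g x}"
  have Dblk: "D c \<subseteq> {c*(2*h)<..Suc c*(2*h)}" for c unfolding D_def Ib_def Jb_def by auto
  have DD: "D c \<subseteq> Dis" if c: "c \<in> B" for c
  proof
    fix x assume x: "x \<in> D c"
    have cm: "Suc c \<le> m" using c S B_def by auto
    have "Suc c*(2*h) \<le> m*(2*h)" using cm by (rule mult_le_mono1)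
    then have xr: "x \<in> {1..n}" using Dblk[of c] x hm by auto
    show "x \<in> Dis"
    proof (cases "\<forall>a\<in>Ib h c. \<not> g a")
      case True
      then have "x \<in> Ib h c" using x D_def by auto
      then have "fS h S x" "\<not> g x" using True c B_def unfolding fS_def by auto
      then show ?thesis using xr Dis_def by auto
    next
      case False
      then have xJ: "x \<in> Jb h c" using x unfolding D_def by (simp only: if_False)
      have "c \<notin> G" "c \<in> S" using c B_def by auto
      then have "\<forall>z\<in>Jb h c. g z" using False unfolding G_def by auto
      then have "g x" "\<not> fS h S x" using xJ Jb_not_fS by auto
      then show ?thesis using xr Dis_def by auto
    qed
  qed
  have cD: "card (D c) = h" for c unfolding D_def by (simp add: card_Ib card_Jb)
  have finB: "finite B" using finS B_def by simp
  have "card (\<Union>(D ` B)) = (\<Sum>c\<in>B. card (D c))"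
  proof (rule card_UN_disjoint[OF finB])
    show "\<forall>i\<in>B. finite (D i)" unfolding D_def Ib_def Jb_def by auto
    show "\<forall>i\<in>B. \<forall>j\<in>B. i \<noteq> j \<longrightarrow> D i \<inter> D j = {}"
    proof (intro ballI impI)
      fix i j :: nat assume "i \<in> B" "j \<in> B" "i \<noteq> j"
      then show "D i \<inter> D j = {}" using Dblk[of i] Dblk[of j] blk_unique[of i h _ j] by fastforce
    qed
  qed
  also have "\<dots> = h * card B" using cD by simp
  finally have e: "card (\<Union>(D ` B)) = h * card B" .
  have "\<Union>(D ` B) \<subseteq> Dis" using DD by blast
  moreover have "finite Dis" unfolding Dis_def by simp
  ultimately have "card (\<Union>(D ` B)) \<le> card Dis" by (rule card_mono[rotated])
  then have c2: "card B * h \<le> card Dis" using e by (simp add: mult.commute)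
  have c1: "(card S + 1 - r) * h \<le> card B * h" using cB by (rule mult_le_mono1)
  show ?thesis using order_trans[OF c1 c2] unfolding Dis_def .
qed

primrec F :: "nat \<Rightarrow> nat \<Rightarrow> nat \<Rightarrow> nat \<Rightarrow> nat \<Rightarrow> nat" where
  "F m s r 0 d = (if r \<le> d then (m-d) choose (s-d) else 0)"
| "F m s r (Suc q) d = (if r \<le> d then (m-d) choose (s-d) else F m s r q (Suc d) + F m s r q d)"

lemma F_ge: "r \<le> d \<Longrightarrow> F m s r q d = (m-d) choose (s-d)"
  by (cases q) auto

lemma F_mono: "F m s r q d \<le> F m s r (Suc q) d"
  by (cases q) auto

lemma binom_step:
  assumes "d < s" "s \<le> m" "0 < m"
  shows "real ((m - Suc d) choose (s - Suc d)) \<le> real ((m-d) choose (s-d)) * (real s / real m)"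
proof -
  obtain M where M: "m - d = Suc M" using assms by (metis Suc_diff_Suc order.strict_trans2)
  obtain K where K: "s - d = Suc K" using assms by (metis Suc_diff_Suc)
  have M': "m - Suc d = M" using M by simp
  have K': "s - Suc d = K" using K by simp
  have e: "Suc K * (Suc M choose Suc K) = Suc M * (M choose K)" by (rule Suc_times_binomial)
  then have e': "real (M choose K) = real (Suc K) * real (Suc M choose Suc K) / real (Suc M)"
    by (metis (mono_tags, lifting) nonzero_mult_div_cancel_left of_nat_0_eq_iff of_nat_mult nat.distinct(1))
  have r: "real (Suc K) / real (Suc M) \<le> real s / real m"
  proof -
    have "real (Suc K) * real m \<le> real s * real (Suc M)"
    proof -
      have hk: "real (Suc K) = real s - real d" using K assms by (simp add: of_nat_diff[symmetric])
      have hm: "real (Suc M) = real m - real d" using M assms by (simp add: of_nat_diff[symmetric])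
      have dsm: "real d * real s \<le> real d * real m" using assms by (simp add: mult_left_mono)
      show ?thesis unfolding hk hm using dsm by (simp add: left_diff_distrib right_diff_distrib mult.commute)
    qed
    then show ?thesis using assms by (simp add: divide_simps)
  qed
  have "real (M choose K) = real (Suc M choose Suc K) * (real (Suc K) / real (Suc M))"
    using e' by (metis mult.commute times_divide_eq_right)
  also have "\<dots> \<le> real (Suc M choose Suc K) * (real s / real m)"
    using r by (intro mult_left_mono) auto
  finally show ?thesis using M K M' K' by simp
qed

lemma F_bound:
  assumes "r \<le> s" "s \<le> m" "0 < m"
  shows "real (F m s r q d) \<le> real ((m-d) choose (s-d)) * real (q choose (r-d)) * (real s / real m)^(r-d)"
proof (induction q arbitrary: d)
  case 0
  then show ?case by auto
next
  case (Suc q)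
  show ?case
  proof (cases "r \<le> d")
    case True then show ?thesis by simp
  next
    case False
    define p where "p = real s / real m"
    have p0: "0 \<le> p" unfolding p_def by simp
    obtain e where e: "r - d = Suc e" using False by (metis Suc_diff_Suc not_le)
    have e2: "r - Suc d = e" using e by simp
    have "real (F m s r (Suc q) d) = real (F m s r q (Suc d)) + real (F m s r q d)" using False by simp
    also have "\<dots> \<le> real ((m - Suc d) choose (s - Suc d)) * real (q choose e) * p^e
        + real ((m-d) choose (s-d)) * real (q choose Suc e) * p^Suc e"
      using Suc.IH[of "Suc d"] Suc.IH[of d] e e2 unfolding p_def by (intro add_mono) auto
    also have "\<dots> \<le> real ((m-d) choose (s-d)) * p * real (q choose e) * p^e
        + real ((m-d) choose (s-d)) * real (q choose Suc e) * p^Suc e"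
    proof -
      have "real ((m - Suc d) choose (s - Suc d)) \<le> real ((m-d) choose (s-d)) * p"
        unfolding p_def using binom_step[of d s m] False assms by simp
      then show ?thesis using p0 by (intro add_mono mult_right_mono) auto
    qed
    also have "\<dots> = real ((m-d) choose (s-d)) * real (Suc q choose Suc e) * p^Suc e"
      by (simp add: algebra_simps)
    finally show ?thesis using e unfolding p_def by simp
  qed
qed

lemma pow_fact: "real r ^ r \<le> 3 ^ r * fact r"
proof (induction r)
  case 0 then show ?case by simp
next
  case (Suc r)
  have key: "real (Suc r) ^ r \<le> 3 * real r ^ r"
  proof (cases "r = 0")
    case True then show ?thesis by simp
  next
    case False
    then have rp: "0 < real r" by simp
    have "real (Suc r) = real r * (1 + 1 / real r)" using rp by (simp add: field_simps)
    then have eq: "real (Suc r) ^ r = real r ^ r * (1 + 1 / real r) ^ r" by (simp add: power_mult_distrib)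
    have "(1 + 1 / real r) ^ r \<le> exp (1 / real r) ^ r"
      by (intro power_mono) (auto simp: rp)
    also have "exp (1 / real r) ^ r = exp 1"
      using exp_of_nat_mult[of r "1 / real r"] rp by simp
    also have "\<dots> \<le> 3" by (rule exp_le)
    finally have "(1 + 1 / real r) ^ r \<le> 3" .
    then have "real r ^ r * (1 + 1 / real r) ^ r \<le> real r ^ r * 3" by (intro mult_left_mono) auto
    then show ?thesis unfolding eq by (simp add: mult.commute)
  qed
  have "real (Suc r) ^ Suc r = real (Suc r) * real (Suc r) ^ r" by simp
  also have "\<dots> \<le> real (Suc r) * (3 * real r ^ r)" using key by (intro mult_left_mono) auto
  also have "\<dots> \<le> real (Suc r) * (3 * (3 ^ r * fact r))" using Suc.IH by (intro mult_left_mono) auto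
  also have "\<dots> = 3 ^ Suc r * fact (Suc r)" by (simp add: algebra_simps)
  finally show ?case .
qed

lemma F_final:
  assumes r1: "1 \<le> r" and s: "s = 2*r" and sm: "s \<le> m" and qm: "12 * q \<le> m"
  shows "real (F m s r q 0) \<le> real (m choose s) / 2"
proof -
  have m0: "0 < m" using r1 s sm by linarith
  have b1: "real (F m s r q 0) \<le> real (m choose s) * real (q choose r) * (real s / real m)^r"
    using F_bound[of r s m q 0] s sm m0 by simp
  have cf: "real (q choose r) * fact r \<le> real q ^ r"
  proof -
    have "(q choose r) * fact r \<le> q ^ r" by (rule binomial_fact_pow)
    then have "real ((q choose r) * fact r) \<le> real (q ^ r)" by (rule of_nat_mono)
    then show ?thesis by simp
  qed
  have fp: "0 < (fact r :: real)" by simp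
  define y where "y = 2 * real q / real m"
  have y0: "0 \<le> y" unfolding y_def by simp
  have B: "real q * (real s / real m) = y * real r" unfolding y_def using s by simp
  have "real (q choose r) * (real s / real m)^r * fact r = (real (q choose r) * fact r) * (real s / real m)^r"
    by (simp only: mult_ac)
  also have "\<dots> \<le> real q ^ r * (real s / real m)^r" using cf by (intro mult_right_mono) auto
  also have "\<dots> = (real q * (real s / real m))^r" by (simp only: power_mult_distrib)
  also have "\<dots> = y ^ r * real r ^ r" by (simp only: B power_mult_distrib)
  also have "\<dots> \<le> y ^ r * (3 ^ r * fact r)"
    using pow_fact[of r] y0 by (intro mult_left_mono) auto
  also have "\<dots> = (3 * y) ^ r * fact r" by (simp only: power_mult_distrib mult_ac)
  also have "\<dots> \<le> (1/2) ^ r * fact r"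
  proof -
    have "6 * real q \<le> real m / 2" using qm by linarith
    then have "3 * y \<le> 1/2" unfolding y_def using m0 by (simp add: divide_simps)
    moreover have "0 \<le> 3 * y" using y0 by simp
    ultimately show ?thesis by (intro mult_right_mono power_mono) auto
  qed
  finally have b2: "real (q choose r) * (real s / real m)^r \<le> (1/2)^r" using fp
    by (simp add: mult_le_cancel_right)
  have h: "(1/2::real)^r \<le> 1/2"
  proof -
    obtain r' where "r = Suc r'" using r1 by (cases r) auto
    then show ?thesis by (simp add: power_le_one)
  qed
  have "real (m choose s) * real (q choose r) * (real s / real m)^r \<le> real (m choose s) * (1/2)"
    using b2 h by (simp only: mult.assoc) (intro mult_left_mono order_trans[OF b2 h]; simp)
  then show ?thesis using b1 by simp
qed

fun found :: "nat \<Rightarrow> dtree \<Rightarrow> nat set \<Rightarrow> nat set" where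
  "found h (Leaf b) S = {}"
| "found h (Node x t0 t1) S = (if fS h S x then {c. x \<in> Ib h c} \<union> found h t1 S else found h t0 S)"

lemma blocks_single: "x \<in> Ib h c \<Longrightarrow> {c'. x \<in> Ib h c'} = {c}"
  using Ib_unique by blast

lemma fS_iff: "x \<in> Ib h c \<Longrightarrow> fS h S x \<longleftrightarrow> c \<in> S"
  unfolding fS_def using Ib_unique by blast

lemma found_sub: "found h t S \<subseteq> S"
proof (induction t)
  case (Leaf b) then show ?case by simp
next
  case (Node x t0 t1)
  show ?case
  proof (cases "fS h S x")
    case True
    then obtain c where c: "c \<in> S" "x \<in> Ib h c" unfolding fS_def by blast
    then show ?thesis using True Node blocks_single[OF c(2)] by auto
  qed (use Node in auto)
qed

lemma run_found: "found h t S \<subseteq> S' \<Longrightarrow> S' \<subseteq> S \<Longrightarrow> run t (fS h S') = run t (fS h S)"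
proof (induction t arbitrary: S')
  case (Leaf b) then show ?case by simp
next
  case (Node x t0 t1)
  show ?case
  proof (cases "fS h S x")
    case True
    then obtain c where c: "c \<in> S" "x \<in> Ib h c" unfolding fS_def by blast
    then have "c \<in> S'" using Node.prems True blocks_single[OF c(2)] by auto
    then have x': "fS h S' x" using c unfolding fS_def by blast
    have "found h t1 S \<subseteq> S'" using Node.prems(1) True by simp
    then have "run t1 (fS h S') = run t1 (fS h S)" using Node.prems(2) by (rule Node.IH(2))
    then show ?thesis using True x' by simp
  next
    case False
    then have x': "\<not> fS h S' x" using Node.prems unfolding fS_def by blast
    have "found h t0 S \<subseteq> S'" using Node.prems(1) False by simp
    then have "run t0 (fS h S') = run t0 (fS h S)" using Node.prems(2) by (rule Node.IH(1))
    then show ?thesis using False x' by simp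
  qed
qed

lemma count_sets:
  assumes "finite D" "D \<subseteq> {..<m::nat}"
  shows "card {S. S \<subseteq> {..<m} \<and> card S = s \<and> D \<subseteq> S} \<le> (m - card D) choose (s - card D)"
proof -
  let ?A = "{S. S \<subseteq> {..<m} \<and> card S = s \<and> D \<subseteq> S}"
  let ?B = "{B. B \<subseteq> {..<m} - D \<and> card B = s - card D}"
  have "inj_on (\<lambda>S. S - D) ?A"
  proof (rule inj_onI)
    fix S S' assume a: "S \<in> ?A" "S' \<in> ?A" "S - D = S' - D"
    have "S = (S - D) \<union> D" using a(1) by blast
    also have "\<dots> = (S' - D) \<union> D" using a(3) by simp
    also have "\<dots> = S'" using a(2) by blast
    finally show "S = S'" .
  qed
  moreover have "(\<lambda>S. S - D) ` ?A \<subseteq> ?B"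
  proof
    fix B assume "B \<in> (\<lambda>S. S - D) ` ?A"
    then obtain S where S: "S \<in> ?A" "B = S - D" by blast
    have "finite S" using S(1) finite_subset by blast
    then have "card (S - D) = card S - card D" using S(1) by (intro card_Diff_subset) (auto intro: finite_subset)
    then show "B \<in> ?B" using S by auto
  qed
  moreover have "finite ?B" by simp
  ultimately have "card ?A \<le> card ?B" by (rule card_inj_on_le)
  also have "card ?B = card ({..<m} - D) choose (s - card D)" by (rule n_subsets) simp
  also have "card ({..<m} - D) = m - card D" using assms by (simp add: card_Diff_subset)
  finally show ?thesis .
qed
lemma fin_fam: "finite {S. S \<subseteq> {..<m::nat} \<and> card S = s \<and> D \<subseteq> S}"
  by (rule finite_subset[of _ "Pow {..<m}"]) auto

lemma card_A_le:
  assumes "A \<subseteq> {S. S \<subseteq> {..<m::nat} \<and> card S = s \<and> D \<subseteq> S}"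
  shows "card {S\<in>A. P S} \<le> card {S. S \<subseteq> {..<m} \<and> card S = s \<and> D \<subseteq> S}"
  by (rule card_mono[OF fin_fam]) (use assms in blast)

lemma count_tree:
  "\<And>D A q. finite D \<Longrightarrow> D \<subseteq> {..<m} \<Longrightarrow> A \<subseteq> {S. S \<subseteq> {..<m} \<and> card S = s \<and> D \<subseteq> S} \<Longrightarrow>
    (\<forall>S\<in>A. num_queries t (fS h S) \<le> q) \<Longrightarrow>
    card {S\<in>A. r \<le> card (D \<union> found h t S)} \<le> F m s r q (card D)"
proof (induction t)
  case (Leaf b)
  show ?case
  proof (cases "r \<le> card D")
    case True
    have "card {S\<in>A. r \<le> card (D \<union> found h (Leaf b) S)} \<le> card {S. S \<subseteq> {..<m} \<and> card S = s \<and> D \<subseteq> S}"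
      using Leaf.prems(3) by (rule card_A_le)
    also have "\<dots> \<le> F m s r q (card D)" using count_sets[OF Leaf.prems(1,2), of s] F_ge[OF True] by simp
    finally show ?thesis .
  qed simp
next
  case (Node x t0 t1)
  note pr = Node.prems
  show ?case
  proof (cases "r \<le> card D")
    case True
    have "card {S\<in>A. r \<le> card (D \<union> found h (Node x t0 t1) S)} \<le> card {S. S \<subseteq> {..<m} \<and> card S = s \<and> D \<subseteq> S}"
      using pr(3) by (rule card_A_le)
    also have "\<dots> \<le> F m s r q (card D)" using count_sets[OF pr(1,2), of s] F_ge[OF True] by simp
    finally show ?thesis .
  next
    case dr: False
    show ?thesis
    proof (cases "A = {}")
      case True then show ?thesis by simp
    next
      case False
      then obtain S0 where "S0 \<in> A" by blast
      then have "num_queries (Node x t0 t1) (fS h S0) \<le> q" using pr by blast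
      then obtain q' where q: "q = Suc q'" by (cases q) auto
      have Fq: "F m s r q (card D) = F m s r q' (Suc (card D)) + F m s r q' (card D)"
        using q dr by simp
      have nq1: "num_queries t1 (fS h S) \<le> q'" if "S \<in> A" "fS h S x" for S
      proof -
        have "num_queries (Node x t0 t1) (fS h S) \<le> q" using pr(4) that(1) by blast
        then show ?thesis using that(2) q by simp
      qed
      have nq0: "num_queries t0 (fS h S) \<le> q'" if "S \<in> A" "\<not> fS h S x" for S
      proof -
        have "num_queries (Node x t0 t1) (fS h S) \<le> q" using pr(4) that(1) by blast
        then show ?thesis using that(2) q by simp
      qed
      show ?thesis
      proof (cases "\<exists>c\<in>D. x \<in> Ib h c")
        case True
        then obtain c where c: "c \<in> D" "x \<in> Ib h c" by blast
        have allx: "fS h S x" if "S \<in> A" for S using that pr(3) c fS_iff[OF c(2)] by auto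
        have eq: "D \<union> found h (Node x t0 t1) S = D \<union> found h t1 S" if "S \<in> A" for S
          using allx[OF that] blocks_single[OF c(2)] c by auto
        have "{S\<in>A. r \<le> card (D \<union> found h (Node x t0 t1) S)} = {S\<in>A. r \<le> card (D \<union> found h t1 S)}"
        proof (rule Collect_cong)
          fix S show "(S \<in> A \<and> r \<le> card (D \<union> found h (Node x t0 t1) S)) = (S \<in> A \<and> r \<le> card (D \<union> found h t1 S))"
          proof (cases "S \<in> A")
            case True show ?thesis by (simp only: eq[OF True])
          qed simp
        qed
        then have "card {S\<in>A. r \<le> card (D \<union> found h (Node x t0 t1) S)} = card {S\<in>A. r \<le> card (D \<union> found h t1 S)}"
          by simp
        also have "\<dots> \<le> F m s r q' (card D)"
          using Node.IH(2)[OF pr(1,2,3)] nq1 allx by blast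
        also have "\<dots> \<le> F m s r q (card D)" using Fq by simp
        finally show ?thesis .
      next
        case noD: False
        show ?thesis
        proof (cases "\<exists>c\<in>{..<m}. x \<in> Ib h c")
          case True
          then obtain c where c: "c < m" "x \<in> Ib h c" by blast
          have cD: "c \<notin> D" using noD c by blast
          define A1 where "A1 = {S\<in>A. c \<in> S}"
          define A0 where "A0 = {S\<in>A. c \<notin> S}"
          have fnd: "found h (Node x t0 t1) S = (if c \<in> S then {c} \<union> found h t1 S else found h t0 S)" for S
            using fS_iff[OF c(2), of S] blocks_single[OF c(2)] by simp
          have split: "{S\<in>A. r \<le> card (D \<union> found h (Node x t0 t1) S)} =
            {S\<in>A1. r \<le> card (insert c D \<union> found h t1 S)} \<union> {S\<in>A0. r \<le> card (D \<union> found h t0 S)}"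
          proof (rule set_eqI)
            fix S
            show "(S \<in> {S\<in>A. r \<le> card (D \<union> found h (Node x t0 t1) S)}) =
              (S \<in> {S\<in>A1. r \<le> card (insert c D \<union> found h t1 S)} \<union> {S\<in>A0. r \<le> card (D \<union> found h t0 S)})"
            proof (cases "c \<in> S")
              case True
              have e: "D \<union> found h (Node x t0 t1) S = insert c D \<union> found h t1 S"
                unfolding fnd[of S] using True by auto
              show ?thesis using True unfolding e A1_def A0_def mem_Collect_eq Un_iff by blast
            next
              case False
              have e: "D \<union> found h (Node x t0 t1) S = D \<union> found h t0 S"
                unfolding fnd[of S] using False by simp
              show ?thesis using False unfolding e A1_def A0_def mem_Collect_eq Un_iff by blast
            qed
          qed
          have c1: "card {S\<in>A1. r \<le> card (insert c D \<union> found h t1 S)} \<le> F m s r q' (card (insert c D))"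
          proof (rule Node.IH(2))
            show "finite (insert c D)" using pr(1) by simp
            show "insert c D \<subseteq> {..<m}" using pr(2) c by simp
            show "A1 \<subseteq> {S. S \<subseteq> {..<m} \<and> card S = s \<and> insert c D \<subseteq> S}" using pr(3) A1_def by auto
            show "\<forall>S\<in>A1. num_queries t1 (fS h S) \<le> q'"
            proof
              fix S assume "S \<in> A1"
              then have "S \<in> A" "c \<in> S" unfolding A1_def by auto
              then show "num_queries t1 (fS h S) \<le> q'" by (intro nq1) (simp_all add: fS_iff[OF c(2)])
            qed
          qed
          have c0: "card {S\<in>A0. r \<le> card (D \<union> found h t0 S)} \<le> F m s r q' (card D)"
          proof (rule Node.IH(1))
            show "finite D" using pr(1) by simp
            show "D \<subseteq> {..<m}" using pr(2) by simp
            show "A0 \<subseteq> {S. S \<subseteq> {..<m} \<and> card S = s \<and> D \<subseteq> S}" using pr(3) A0_def by auto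
            show "\<forall>S\<in>A0. num_queries t0 (fS h S) \<le> q'"
            proof
              fix S assume "S \<in> A0"
              then have "S \<in> A" "c \<notin> S" unfolding A0_def by auto
              then show "num_queries t0 (fS h S) \<le> q'" by (intro nq0) (simp_all add: fS_iff[OF c(2)])
            qed
          qed
          have "card {S\<in>A. r \<le> card (D \<union> found h (Node x t0 t1) S)} \<le>
              card {S\<in>A1. r \<le> card (insert c D \<union> found h t1 S)} + card {S\<in>A0. r \<le> card (D \<union> found h t0 S)}"
            unfolding split by (rule card_Un_le)
          also have "\<dots> \<le> F m s r q (card D)"
          proof -
            have ci: "card (insert c D) = Suc (card D)" using cD pr(1) by simp
            show ?thesis using c1 c0 Fq unfolding ci by linarith
          qed
          finally show ?thesis .
        next
          case False
          have nx: "\<not> fS h S x" if "S \<in> A" for S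
            using that pr(3) False unfolding fS_def by blast
          have "card {S\<in>A. r \<le> card (D \<union> found h (Node x t0 t1) S)} = card {S\<in>A. r \<le> card (D \<union> found h t0 S)}"
          proof -
            have "{S\<in>A. r \<le> card (D \<union> found h (Node x t0 t1) S)} = {S\<in>A. r \<le> card (D \<union> found h t0 S)}"
            proof (rule Collect_cong)
              fix S show "(S \<in> A \<and> r \<le> card (D \<union> found h (Node x t0 t1) S)) = (S \<in> A \<and> r \<le> card (D \<union> found h t0 S))"
                using nx[of S] by auto
            qed
            then show ?thesis by simp
          qed
          also have "\<dots> \<le> F m s r q' (card D)"
            using Node.IH(1)[OF pr(1,2,3)] nq0 nx by blast
          also have "\<dots> \<le> F m s r q (card D)" using Fq by simp
          finally show ?thesis .
        qed
      qed
    qed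
  qed
qed

lemma avg:
  fixes T :: "'b pmf" and Fam :: "'a set" and P :: "'a \<Rightarrow> 'b \<Rightarrow> bool"
  assumes fin: "finite Fam" and lo: "\<forall>S\<in>Fam. measure_pmf.prob T {t. P S t} \<ge> a"
    and hi: "\<forall>t\<in>set_pmf T. real (card {S\<in>Fam. P S t}) \<le> B"
  shows "real (card Fam) * a \<le> B"
proof -
  have ind_int: "integrable (measure_pmf T) (\<lambda>t. indicator {t. P S t} t :: real)" for S
    by (rule measure_pmf.integrable_const_bound[where B=1]) (auto split: split_indicator)
  have cnt: "real (card {S\<in>Fam. P S t}) = (\<Sum>S\<in>Fam. indicator {t. P S t} t)" for t
  proof -
    have "real (card {S\<in>Fam. P S t}) = (\<Sum>S\<in>{S\<in>Fam. P S t}. 1)" by simp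
    also have "\<dots> = (\<Sum>S\<in>Fam. if P S t then 1 else 0)" using fin by (rule sum.inter_filter)
    also have "\<dots> = (\<Sum>S\<in>Fam. indicator {t. P S t} t)" by (intro sum.cong) (auto split: split_indicator)
    finally show ?thesis .
  qed
  have "real (card Fam) * a = (\<Sum>S\<in>Fam. a)" by simp
  also have "\<dots> \<le> (\<Sum>S\<in>Fam. measure_pmf.prob T {t. P S t})" using lo by (intro sum_mono) auto
  also have "\<dots> = (\<Sum>S\<in>Fam. measure_pmf.expectation T (\<lambda>t. indicator {t. P S t} t))"
    by (intro sum.cong) auto
  also have "\<dots> = measure_pmf.expectation T (\<lambda>t. \<Sum>S\<in>Fam. indicator {t. P S t} t)"
    using Bochner_Integration.integral_sum[where I=Fam and f="\<lambda>S t. indicator {t. P S t} t :: real", OF ind_int] by simp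
  also have "\<dots> = measure_pmf.expectation T (\<lambda>t. real (card {S\<in>Fam. P S t}))"
    using cnt by simp
  also have "\<dots> \<le> B"
  proof (rule measure_pmf.integral_le_const)
    show "integrable (measure_pmf T) (\<lambda>t. real (card {S\<in>Fam. P S t}))"
    proof (rule measure_pmf.integrable_const_bound[where B="real (card Fam)"])
      show "AE t in measure_pmf T. norm (real (card {S\<in>Fam. P S t})) \<le> real (card Fam)"
        using fin by (auto intro!: card_mono)
    qed simp
    show "AE t in measure_pmf T. real (card {S\<in>Fam. P S t}) \<le> B"
      using hi by (simp add: AE_measure_pmf_iff)
  qed
  finally show ?thesis .
qed

lemma prob1_all:
  assumes "measure_pmf.prob T {t. Q t} = 1" "t \<in> set_pmf T"
  shows "Q t"
proof -
  have "AE x in measure_pmf T. x \<in> {t. Q t}"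
    using assms(1) by (subst measure_pmf.prob_eq_1[symmetric]) auto
  then show ?thesis using assms(2) by (simp add: AE_measure_pmf_iff)
qed

lemma arith_far:
  fixes e r m h n :: real
  assumes e: "0 < e" and r: "1 \<le> r" and m: "0 < m" "m \<le> r / (4*e)"
    and h: "h \<ge> n / (2*m) - 1" and n: "n \<ge> (r+1) / e" "0 \<le> n"
  shows "(r+1) * h \<ge> e * n"
proof -
  have em: "4*e*m \<le> r" using m e by (simp add: field_simps)
  have en: "e * n \<ge> r + 1" using n e by (simp add: field_simps)
  have "r * (n / (2*m)) \<ge> 4*e*m * (n / (2*m))"
    using em n m by (intro mult_right_mono) auto
  also have "4*e*m * (n / (2*m)) = 2*e*n" using m by (simp add: field_simps)
  finally have a: "r * (n / (2*m)) \<ge> 2*e*n" .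
  have b: "(r+1) * (n / (2*m)) \<ge> r * (n / (2*m))" using n m by (simp add: field_simps)
  have "(r+1) * h \<ge> (r+1) * (n / (2*m) - 1)" using h r by (intro mult_left_mono) auto
  then show ?thesis using a b en by (simp add: algebra_simps)
qed

lemma main_k:
  assumes k1: "1 \<le> k" and e0: "0 < e" and e1: "e \<le> 1/100"
  shows "\<exists>N. \<forall>n\<ge>N. \<forall>T q. one_sided_tester n k e T q \<longrightarrow> real q \<ge> real k / (200*e)"
proof -
  define r where "r = (k+2) div 2"
  define s where "s = 2*r"
  define m where "m = nat \<lfloor>real r / (4*e)\<rfloor>"
  have r1: "1 \<le> r" using k1 r_def by simp
  have rk: "real k \<le> 2 * real r" unfolding r_def by linarith
  have x0: "real r / (4*e) \<ge> 25 * real r" using e0 e1 r1 by (simp add: field_simps)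
  define x where "x = real r / (4*e)"
  have x00: "0 \<le> x" unfolding x_def using e0 by simp
  have fl0: "0 \<le> \<lfloor>x\<rfloor>" using x00 by simp
  have mx: "real m = real_of_int \<lfloor>x\<rfloor>" unfolding m_def x_def[symmetric] using fl0 by simp
  have mle: "real m \<le> real r / (4*e)" unfolding mx x_def[symmetric] by (rule of_int_floor_le)
  have mgt: "real m > real r / (4*e) - 1" unfolding mx x_def[symmetric] using floor_correct[of x] by linarith
  have rr: "real r / (8*e) \<ge> 1" using e0 e1 r1 by (simp add: field_simps)
  have mge: "real m \<ge> real r / (8*e)"
  proof -
    have "real r / (4*e) = 2 * (real r / (8*e))" by (simp add: field_simps)
    then show ?thesis using mgt rr by linarith
  qed
  have rR: "real r \<ge> 1" using r1 by simp
  have "real m \<ge> 2 * real r" using x0 mgt rR by linarith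
  then have "real s \<le> real m" unfolding s_def by simp
  then have sm: "s \<le> m" by (simp only: of_nat_le_iff)
  have m0: "0 < m" using sm s_def r1 by linarith
  define N where "N = 2*m + nat \<lceil>real (r+1) / e\<rceil> + 1"
  show ?thesis
  proof (intro exI allI impI)
    fix n T q
    assume nN: "N \<le> n" and tst: "one_sided_tester n k e T q"
    define h where "h = n div (2*m)"
    have dm: "h * (2*m) + n mod (2*m) = n" unfolding h_def by (rule div_mult_mod_eq)
    have mlt: "n mod (2*m) < 2*m" using m0 by simp
    have ee: "m*(2*h) = h*(2*m)" by (simp add: algebra_simps)
    have hm: "m*(2*h) \<le> n" using dm ee by linarith
    have hr: "real h \<ge> real n / (2*real m) - 1"
    proof -
      have "n < (h + 1) * (2*m)" using dm mlt by (simp add: algebra_simps)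
      then have "real n < real ((h + 1) * (2*m))" by (simp only: of_nat_less_iff)
      then have "real n < (real h + 1) * (2*real m)" by (simp add: algebra_simps)
      then show ?thesis using m0 by (simp add: field_simps)
    qed
    have nr: "real n \<ge> real (r+1) / e"
    proof -
      have "real (nat \<lceil>real (r+1) / e\<rceil>) \<ge> real (r+1) / e" by linarith
      then show ?thesis using nN N_def by linarith
    qed
    have n0: "0 < n" using nN N_def by simp
    define Fam where "Fam = {S. S \<subseteq> {..<m} \<and> card S = s \<and> {} \<subseteq> S}"
    have finFam: "finite Fam" unfolding Fam_def by (rule fin_fam)
    have cardFam: "card Fam = m choose s"
    proof -
      have "Fam = {S. S \<subseteq> {..<m} \<and> card S = s}" unfolding Fam_def by simp
      then show ?thesis using n_subsets[of "{..<m}" s] by simp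
    qed
    have far: "far_from_k_monotone n k e (fS h S)" if S: "S \<in> Fam" for S
      unfolding far_from_k_monotone_def
    proof (intro allI impI)
      fix g assume km: "k_monotone n k g"
      have Sm: "S \<subseteq> {..<m}" and cS: "card S = s" using S Fam_def by auto
      have c: "(card S + 1 - r) * h \<le> card {x\<in>{1..n}. fS h S x \<noteq> g x}"
        by (rule far_count[OF km Sm r_def hm])
      have "card S + 1 - r = r + 1" using cS s_def by simp
      then have "(r+1) * h \<le> card {x\<in>{1..n}. fS h S x \<noteq> g x}" using c by simp
      then have "real ((r+1) * h) \<le> real (card {x\<in>{1..n}. fS h S x \<noteq> g x})" by (simp only: of_nat_le_iff)
      then have c': "real (r+1) * real h \<le> real (card {x\<in>{1..n}. fS h S x \<noteq> g x})" by (simp only: of_nat_mult)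
      have "(real r + 1) * real h \<ge> e * real n"
        by (rule arith_far[OF e0 _ _ mle hr]) (use r1 m0 nr in \<open>auto simp: add.commute\<close>)
      then have "real (r+1) * real h \<ge> e * real n" by (simp add: add.commute)
      then have "e * real n \<le> real (card {x\<in>{1..n}. fS h S x \<noteq> g x})" using c' by linarith
      then show "e \<le> fdist n (fS h S) g" unfolding fdist_def using n0 by (simp add: field_simps)
    qed
    show "real q \<ge> real k / (200*e)"
    proof (rule ccontr)
      assume "\<not> real q \<ge> real k / (200*e)"
      then have ql: "real q < real k / (200*e)" by simp
      have "real k / (200*e) \<le> 2 * real r / (200*e)" using rk e0 by (simp add: field_simps)
      then have "12 * real q < 12 * (2 * real r / (200*e))" using ql by linarith
      also have "\<dots> \<le> real r / (8*e)"
      proof -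
        have a1: "12 * (2 * real r / (200*e)) = (24/200) * (real r / e)" by (simp add: field_simps)
        have a2: "real r / (8*e) = (1/8) * (real r / e)" by (simp add: field_simps)
        have "0 \<le> real r / e" using e0 by simp
        then show ?thesis unfolding a1 a2 by (intro mult_right_mono) auto
      qed
      finally have "12 * real q < real m" using mge by linarith
      then have "real (12 * q) < real m" by simp
      then have "12 * q < m" by (simp only: of_nat_less_iff)
      then have qm: "12 * q \<le> m" by simp
      have T1: "\<forall>t\<in>set_pmf T. queries_in n t \<and> (\<forall>f. num_queries t f \<le> q)"
        and T2: "\<forall>f. k_monotone n k f \<longrightarrow> measure_pmf.prob T {t. run t f} = 1"
        and T3: "\<forall>f. far_from_k_monotone n k e f \<longrightarrow> measure_pmf.prob T {t. \<not> run t f} \<ge> 2/3"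
        using tst unfolding one_sided_tester_def by auto
      have lo: "\<forall>S\<in>Fam. measure_pmf.prob T {t. \<not> run t (fS h S)} \<ge> 2/3"
        using T3 far by blast
      have hi: "\<forall>t\<in>set_pmf T. real (card {S\<in>Fam. \<not> run t (fS h S)}) \<le> real (m choose s) / 2"
      proof
        fix t assume t: "t \<in> set_pmf T"
        have sub: "{S\<in>Fam. \<not> run t (fS h S)} \<subseteq> {S\<in>Fam. r \<le> card ({} \<union> found h t S)}"
        proof (rule subsetI, rule ccontr)
          fix S assume S: "S \<in> {S\<in>Fam. \<not> run t (fS h S)}"
            and nS: "S \<notin> {S\<in>Fam. r \<le> card ({} \<union> found h t S)}"
          then have lt: "card (found h t S) < r" by auto
          have finS: "finite S" using S Fam_def finite_subset by blast
          have fs: "found h t S \<subseteq> S" by (rule found_sub)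
          have fin: "finite (found h t S)" using finS fs finite_subset by blast
          have "k_monotone n k (fS h (found h t S))" by (rule fS_kmono[OF fin lt r_def])
          then have "measure_pmf.prob T {u. run u (fS h (found h t S))} = 1" using T2 by blast
          then have "run t (fS h (found h t S))" using t by (rule prob1_all[where Q="\<lambda>u. run u (fS h (found h t S))"])
          moreover have "run t (fS h (found h t S)) = run t (fS h S)"
            by (rule run_found) (use fs in auto)
          ultimately show False using S by simp
        qed
        have "card {S\<in>Fam. \<not> run t (fS h S)} \<le> card {S\<in>Fam. r \<le> card ({} \<union> found h t S)}"
          using sub finFam by (intro card_mono) auto
        also have "\<dots> \<le> F m s r q (card ({}::nat set))"
        proof (rule count_tree)
          show "Fam \<subseteq> {S. S \<subseteq> {..<m} \<and> card S = s \<and> {} \<subseteq> S}" unfolding Fam_def by simp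
          show "\<forall>S\<in>Fam. num_queries t (fS h S) \<le> q" using T1 t by blast
        qed auto
        finally have "real (card {S\<in>Fam. \<not> run t (fS h S)}) \<le> real (F m s r q 0)" by simp
        also have "\<dots> \<le> real (m choose s) / 2" by (rule F_final[OF r1 s_def sm qm])
        finally show "real (card {S\<in>Fam. \<not> run t (fS h S)}) \<le> real (m choose s) / 2" .
      qed
      have "real (card Fam) * (2/3) \<le> real (m choose s) / 2"
        by (rule avg[OF finFam lo hi])
      moreover have "0 < m choose s" using sm by (simp add: zero_less_binomial)
      ultimately show False unfolding cardFam by simp
    qed
  qed
qed

theorem theorem1p3:
  shows "\<exists>c>0. \<exists>\<epsilon>\<^sub>0>0. \<forall>(k::nat) (\<epsilon>::real). 0 < \<epsilon> \<and> \<epsilon> \<le> \<epsilon>\<^sub>0 \<longrightarrow>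
           (\<exists>N. \<forall>n\<ge>N. \<forall>T q. one_sided_tester n k \<epsilon> T q \<longrightarrow> real q \<ge> c * real k / \<epsilon>)"
proof -
  have main: "\<exists>N. \<forall>n\<ge>N. \<forall>T q. one_sided_tester n k e T q \<longrightarrow> real q \<ge> 1/200 * real k / e"
    if e: "0 < e" "e \<le> 1/100" for k :: nat and e :: real
  proof (cases "k = 0")
    case True then show ?thesis by simp
  next
    case False
    then obtain N where N: "\<forall>n\<ge>N. \<forall>T q. one_sided_tester n k e T q \<longrightarrow> real q \<ge> real k / (200*e)"
      using main_k[of k e] e by auto
    have "1/200 * real k / e = real k / (200*e)" by simp
    then show ?thesis using N by metis
  qed
  show ?thesis
    apply (rule exI[where x="1/200"])
    apply (rule conjI)
     apply simp
    apply (rule exI[where x="1/100"])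
    using main by auto
qed

end
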